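(* Let $2\le s\le 2^{n-2}$ and let $S=\{\mathbf{v}_1,\dots,\mathbf{v}_s\}\subseteq\mathbb{F}_2^n$ be a set of $s$ distinct nonzero vectors with $\dim S\ge2$. Then for any nonnegative integers $b_1,\dots,b_s$ with $\sum_{j=1}^s b_j=2^{\dim S-2}$, the graph $G_S$ has an independent set $A$ of size $2^{\dim S-2}$ with $|A\cap V_j|=b_j$ for every $j\in[s]$.
   Context: For $S=\{\mathbf{v}_1,\dots,\mathbf{v}_s\}\subseteq\mathbb{F}_2^n$ a set of distinct nonzero vectors, $\langle S\rangle$ is its span and $\dim S=\dim\langle S\rangle$. The $s$-partite graph $G_S$ has vertex set $V_1\sqcup\dots\sqcup V_s$ (disjoint union), where $V_j=\{\{\mathbf{x},\mathbf{x}+\mathbf{v}_j\}:\mathbf{x}\in\langle S\rangle\}$ is the set of cosets of $\langle\mathbf{v}_j\rangle$ in $\langle S\rangle$ (so $|V_j|=2^{\dim S-1}$); there are no edges inside any $V_j$, and for $j_1\ne j_2$ a vertex $\{\mathbf{x}_1,\mathbf{x}_1+\mathbf{v}_{j_1}\}\in V_{j_1}$ is adjacent to $\{\mathbf{x}_2,\mathbf{x}_2+\mathbf{v}_{j_2}\}\in V_{j_2}$ iff these two sets intersect. *)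

theory Defs
  imports Main
begin

text \<open>Vectors of F_2^n are modelled as functions nat => bool vanishing from index n on;
  addition over F_2 is componentwise exclusive or.\<close>

definition vec2 :: "nat \<Rightarrow> (nat \<Rightarrow> bool) set" where
  "vec2 n = {v. \<forall>i\<ge>n. \<not> v i}"

definition vzero :: "nat \<Rightarrow> bool" where
  "vzero = (\<lambda>_. False)"

definition vadd :: "(nat \<Rightarrow> bool) \<Rightarrow> (nat \<Rightarrow> bool) \<Rightarrow> (nat \<Rightarrow> bool)" where
  "vadd x y = (\<lambda>i. x i \<noteq> y i)"

inductive_set span2 :: "(nat \<Rightarrow> bool) set \<Rightarrow> (nat \<Rightarrow> bool) set" for S where
  zero: "vzero \<in> span2 S"
| add: "x \<in> span2 S \<Longrightarrow> v \<in> S \<Longrightarrow> vadd x v \<in> span2 S"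

definition dim2 :: "(nat \<Rightarrow> bool) set \<Rightarrow> nat" where
  "dim2 S = (LEAST k. \<exists>B. finite B \<and> card B = k \<and> span2 B = span2 S)"

text \<open>The part V_j of G_S, for the vector family v indexed by {1..s} with S = v ` {1..s}.
  Vertices are tagged with their part index j (disjoint union).\<close>
definition part :: "(nat \<Rightarrow> (nat \<Rightarrow> bool)) \<Rightarrow> nat \<Rightarrow> nat \<Rightarrow> (nat \<times> (nat \<Rightarrow> bool) set) set" where
  "part v s j = {(j, {x, vadd x (v j)}) | x. x \<in> span2 (v ` {1..s})}"

definition adjG :: "nat \<times> (nat \<Rightarrow> bool) set \<Rightarrow> nat \<times> (nat \<Rightarrow> bool) set \<Rightarrow> bool" where
  "adjG a b = (fst a \<noteq> fst b \<and> snd a \<inter> snd b \<noteq> {})"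

definition indep_set_GS :: "(nat \<Rightarrow> (nat \<Rightarrow> bool)) \<Rightarrow> nat \<Rightarrow> (nat \<times> (nat \<Rightarrow> bool) set) set \<Rightarrow> bool" where
  "indep_set_GS v s A = (A \<subseteq> (\<Union>j\<in>{1..s}. part v s j) \<and> (\<forall>a\<in>A. \<forall>b\<in>A. \<not> adjG a b))"

end

theory Submission
  imports Defs
begin

lemma vadd_zero[simp]: "vadd x vzero = x" "vadd vzero x = x"
  by (auto simp: vadd_def vzero_def)

lemma vadd_assoc: "vadd (vadd x y) z = vadd x (vadd y z)"
  by (auto simp: vadd_def fun_eq_iff)

lemma vadd_comm: "vadd x y = vadd y x"
  by (auto simp: vadd_def fun_eq_iff)

lemma vadd_cancel[simp]: "vadd (vadd x y) y = x" "vadd y (vadd y x) = x"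
  by (auto simp: vadd_def fun_eq_iff)

lemma vadd_inj: "inj (vadd w)"
  by (rule injI) (metis vadd_cancel(2))

lemma span2_closed:
  assumes "y \<in> span2 S" "x \<in> span2 S" shows "vadd x y \<in> span2 S"
  using assms(1)
proof induction
  case zero thus ?case using assms(2) by simp
next
  case (add y v)
  have "vadd x (vadd y v) = vadd (vadd x y) v" by (simp add: vadd_assoc)
  thus ?case using add span2.add by metis
qed

lemma gen_in: "v \<in> S \<Longrightarrow> v \<in> span2 S"
  using span2.add[OF span2.zero] by fastforce

lemma span2_sub: assumes "S \<subseteq> span2 T" shows "span2 S \<subseteq> span2 T"
proof
  fix x assume "x \<in> span2 S" thus "x \<in> span2 T"
  proof induction
    case zero thus ?case by (rule span2.zero)
  next
    case (add x v) thus ?case using assms span2_closed by blast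
  qed
qed

lemma span2_mono: "B \<subseteq> C \<Longrightarrow> span2 B \<subseteq> span2 C"
  using span2_sub gen_in by blast

lemma span2_empty: "span2 {} = {vzero}"
proof -
  have "x \<in> span2 {} \<Longrightarrow> x = vzero" for x
    by (induction rule: span2.induct) auto
  thus ?thesis using span2.zero by blast
qed

lemma span2_insert: "span2 (insert w B) = span2 B \<union> (vadd w) ` span2 B"
proof
  show "span2 (insert w B) \<subseteq> span2 B \<union> (vadd w) ` span2 B"
  proof
    fix x assume "x \<in> span2 (insert w B)"
    thus "x \<in> span2 B \<union> (vadd w) ` span2 B"
    proof induction
      case zero thus ?case using span2.zero by blast
    next
      case (add x v)
      show ?case
      proof (cases "v = w")
        case True
        show ?thesis
        proof (cases "x \<in> span2 B")
          case True thus ?thesis using \<open>v = w\<close> vadd_comm by blast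
        next
          case False
          then obtain y where "y \<in> span2 B" "x = vadd w y" using add by blast
          thus ?thesis using \<open>v = w\<close> by (simp add: vadd_comm)
        qed
      next
        case False
        hence vB: "v \<in> B" using add by blast
        show ?thesis
        proof (cases "x \<in> span2 B")
          case True thus ?thesis using vB span2.add by blast
        next
          case False
          then obtain y where y: "y \<in> span2 B" "x = vadd w y" using add by blast
          hence "vadd x v = vadd w (vadd y v)" by (simp add: vadd_assoc)
          thus ?thesis using y vB span2.add by blast
        qed
      qed
    qed
  qed
next
  have w: "w \<in> span2 (insert w B)" by (rule gen_in) simp
  have m: "span2 B \<subseteq> span2 (insert w B)" by (rule span2_mono) blast
  show "span2 B \<union> (vadd w) ` span2 B \<subseteq> span2 (insert w B)"
  proof (intro Un_least image_subsetI)
    fix y assume "y \<in> span2 B"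
    hence "y \<in> span2 (insert w B)" using m by blast
    hence "vadd y w \<in> span2 (insert w B)" using w span2_closed by blast
    thus "vadd w y \<in> span2 (insert w B)" by (simp add: vadd_comm)
  qed (use m in blast)
qed

lemma vec2_finite: "finite (vec2 n)"
proof -
  have "inj_on (\<lambda>v. {i. v i}) (vec2 n)"
    by (rule inj_onI) (auto simp: fun_eq_iff)
  moreover have "(\<lambda>v. {i. v i}) ` vec2 n \<subseteq> Pow {..<n}"
    by (auto simp: vec2_def) (meson not_le)
  ultimately show ?thesis
    by (meson finite_Pow_iff finite_lessThan finite_subset inj_on_finite)
qed

lemma span2_vec2: assumes "S \<subseteq> vec2 n" shows "span2 S \<subseteq> vec2 n"
proof
  fix x assume "x \<in> span2 S" thus "x \<in> vec2 n"
    by induction (use assms in \<open>auto simp: vec2_def vzero_def vadd_def\<close>)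
qed

lemma dim_aux:
  assumes fin: "finite (span2 S)"
  shows "\<forall>B. B \<subseteq> span2 S \<longrightarrow> finite B \<longrightarrow> card (span2 B) = 2 ^ card B
     \<longrightarrow> card (span2 S) - card (span2 B) = m
     \<longrightarrow> (\<exists>B'. finite B' \<and> span2 B' = span2 S \<and> 2 ^ card B' \<le> card (span2 S))"
proof (induction m rule: less_induct)
  case (less m)
  show ?case
  proof (intro allI impI)
    fix B assume B: "B \<subseteq> span2 S" "finite B" "card (span2 B) = 2 ^ card B"
      "card (span2 S) - card (span2 B) = m"
    have sub: "span2 B \<subseteq> span2 S" using B(1) span2_sub by blast
    show "\<exists>B'. finite B' \<and> span2 B' = span2 S \<and> 2 ^ card B' \<le> card (span2 S)"
    proof (cases "span2 B = span2 S")
      case True thus ?thesis using B by auto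
    next
      case False
      then obtain w where w: "w \<in> span2 S" "w \<notin> span2 B" using sub by blast
      have wB: "w \<notin> B" using w gen_in by blast
      let ?C = "insert w B"
      have disj: "span2 B \<inter> (vadd w) ` span2 B = {}"
      proof (rule ccontr)
        assume "span2 B \<inter> vadd w ` span2 B \<noteq> {}"
        then obtain y where y: "y \<in> span2 B" "vadd w y \<in> span2 B" by blast
        have "vadd (vadd w y) y \<in> span2 B" using y span2_closed by blast
        thus False using w by simp
      qed
      have finB: "finite (span2 B)" using sub fin finite_subset by blast
      have "card (span2 ?C) = card (span2 B) + card ((vadd w) ` span2 B)"
        unfolding span2_insert using disj finB by (simp add: card_Un_disjoint)
      also have "card ((vadd w) ` span2 B) = card (span2 B)"
        using vadd_inj card_image inj_on_subset by (metis subset_UNIV)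
      finally have cC: "card (span2 ?C) = 2 ^ card ?C" using B(2,3) wB by simp
      have subC: "span2 ?C \<subseteq> span2 S" using B(1) w span2_sub by blast
      have "card (span2 ?C) \<le> card (span2 S)" using subC fin card_mono by blast
      moreover have "card (span2 B) < card (span2 ?C)" using cC B(3) wB B(2) by simp
      ultimately have "card (span2 S) - card (span2 ?C) < m" using B(4) by linarith
      thus ?thesis using less[rule_format, OF _ _ _ cC refl] B w by blast
    qed
  qed
qed

lemma dim_bound:
  assumes fin: "finite (span2 S)"
  shows "2 ^ dim2 S \<le> card (span2 S)"
proof -
  obtain B' where B': "finite B'" "span2 B' = span2 S" "2 ^ card B' \<le> card (span2 S)"
    using dim_aux[OF fin, of "card (span2 S) - 1", rule_format, of "{}"] span2_empty by auto
  have "dim2 S \<le> card B'" unfolding dim2_def by (rule Least_le) (use B' in blast)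
  hence "(2::nat) ^ dim2 S \<le> 2 ^ card B'" by (rule power_increasing) simp
  thus ?thesis using B' by linarith
qed

lemma part_fst: "a \<in> part v s j \<Longrightarrow> fst a = j"
  by (auto simp: part_def)

lemma part_card: "a \<in> part v s j \<Longrightarrow> card (snd a) \<le> 2"
  by (auto simp: part_def card_insert_le_m1)

lemma greedy:
  assumes finW: "finite (span2 (v ` {1..s}))"
    and cardW: "2 ^ d \<le> card (span2 (v ` {1..s}))" and d2: "d \<ge> 2"
  shows "\<forall>c. (\<Sum>j=1..s. c j) = k \<longrightarrow> k \<le> 2 ^ (d - 2) \<longrightarrow>
     (\<exists>A. finite A \<and> indep_set_GS v s A \<and> card A = k \<and> (\<forall>j\<in>{1..s}. card (A \<inter> part v s j) = c j))"
proof (induction k)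
  case 0
  show ?case
  proof (intro allI impI)
    fix c :: "nat \<Rightarrow> nat" assume "(\<Sum>j=1..s. c j) = 0"
    hence "\<forall>j\<in>{1..s}. c j = 0" by simp
    thus "\<exists>A. finite A \<and> indep_set_GS v s A \<and> card A = 0 \<and> (\<forall>j\<in>{1..s}. card (A \<inter> part v s j) = c j)"
      by (intro exI[of _ "{}"]) (auto simp: indep_set_GS_def)
  qed
next
  case (Suc k)
  let ?W = "span2 (v ` {1..s})"
  show ?case
  proof (intro allI impI)
    fix c :: "nat \<Rightarrow> nat" assume sc: "(\<Sum>j=1..s. c j) = Suc k" and kb: "Suc k \<le> 2 ^ (d - 2)"
    obtain j where j: "j \<in> {1..s}" "c j > 0"
    proof -
      have "\<exists>j\<in>{1..s}. c j \<noteq> 0" using sc by (metis sum.neutral nat.distinct(1))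
      thus ?thesis using that by blast
    qed
    define c' where "c' = c(j := c j - 1)"
    have "(\<Sum>i=1..s. c i) = c j + (\<Sum>i\<in>{1..s}-{j}. c i)" by (rule sum.remove) (use j in auto)
    moreover have "(\<Sum>i=1..s. c' i) = c' j + (\<Sum>i\<in>{1..s}-{j}. c' i)" by (rule sum.remove) (use j in auto)
    moreover have "(\<Sum>i\<in>{1..s}-{j}. c' i) = (\<Sum>i\<in>{1..s}-{j}. c i)"
      by (rule sum.cong) (auto simp: c'_def)
    ultimately have sc': "(\<Sum>i=1..s. c' i) = k" using sc j by (simp add: c'_def)
    obtain A' where A': "finite A'" "indep_set_GS v s A'" "card A' = k"
      "\<forall>i\<in>{1..s}. card (A' \<inter> part v s i) = c' i"
      using Suc.IH[rule_format, OF sc'] kb by auto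
    define U where "U = (\<Union>a\<in>A'. snd a)"
    have Apart: "\<forall>a\<in>A'. \<exists>i. a \<in> part v s i" using A'(2) by (auto simp: indep_set_GS_def)
    have "card U \<le> (\<Sum>a\<in>A'. card (snd a))" unfolding U_def using A'(1) by (rule card_UN_le)
    also have "\<dots> \<le> card A' * 2"
    proof -
      have "\<forall>a\<in>A'. card (snd a) \<le> 2" using Apart part_card by blast
      thus ?thesis using sum_bounded_above[of A' "\<lambda>a. card (snd a)" 2] by simp
    qed
    finally have cU: "card U \<le> 2 * k" using A'(3) by simp
    have "\<forall>a\<in>A'. finite (snd a)" using Apart by (auto simp: part_def)
    hence finU: "finite U" unfolding U_def using A'(1) by blast
    define Bad where "Bad = U \<union> (\<lambda>y. vadd y (v j)) ` U"
    have "card Bad \<le> card U + card ((\<lambda>y. vadd y (v j)) ` U)" unfolding Bad_def by (rule card_Un_le)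
    also have "\<dots> \<le> card U + card U" using card_image_le finU by auto
    finally have "card Bad \<le> 4 * k" using cU by simp
    moreover have "4 * k < 4 * 2 ^ (d - 2)" using kb by simp
    moreover have "4 * 2 ^ (d - 2) = (2::nat) ^ d"
    proof -
      obtain m where "d = m + 2" using d2 by (metis le_add_diff_inverse2)
      thus ?thesis by simp
    qed
    ultimately have "card Bad < card ?W" using cardW by linarith
    moreover have "finite Bad" using finU by (simp add: Bad_def)
    ultimately have "\<not> ?W \<subseteq> Bad" using card_mono[of Bad ?W] by linarith
    then obtain x where x: "x \<in> ?W" "x \<notin> Bad" by blast
    have xU: "x \<notin> U" using x by (simp add: Bad_def)
    have x2U: "vadd x (v j) \<notin> U"
    proof
      assume "vadd x (v j) \<in> U"
      hence "vadd (vadd x (v j)) (v j) \<in> Bad" unfolding Bad_def by blast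
      thus False using x by simp
    qed
    define e where "e = (j, {x, vadd x (v j)})"
    have epart: "e \<in> part v s j" unfolding e_def part_def using x by blast
    have esnd: "snd e \<inter> snd a = {}" if "a \<in> A'" for a
      using that xU x2U by (auto simp: e_def U_def)
    have eA: "e \<notin> A'"
    proof
      assume "e \<in> A'"
      hence "snd e \<inter> snd e = {}" using esnd by blast
      thus False by (simp add: e_def)
    qed
    define A where "A = insert e A'"
    have indep: "indep_set_GS v s A"
    proof -
      have "A \<subseteq> (\<Union>j\<in>{1..s}. part v s j)" using A'(2) epart j by (auto simp: A_def indep_set_GS_def)
      moreover have "\<forall>a\<in>A. \<forall>b\<in>A. \<not> adjG a b"
      proof (intro ballI)
        fix a b assume a: "a \<in> A" and b: "b \<in> A"
        show "\<not> adjG a b"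
        proof (cases "a = e")
          case True
          thus ?thesis using b esnd by (cases "b = e") (auto simp: A_def adjG_def)
        next
          case False
          hence aA: "a \<in> A'" using a by (simp add: A_def)
          show ?thesis
          proof (cases "b = e")
            case True
            have "snd e \<inter> snd a = {}" using aA esnd by blast
            thus ?thesis using True by (auto simp: adjG_def)
          next
            case False
            hence "b \<in> A'" using b by (simp add: A_def)
            thus ?thesis using aA A'(2) by (simp add: indep_set_GS_def)
          qed
        qed
      qed
      ultimately show ?thesis by (simp add: indep_set_GS_def)
    qed
    have counts: "card (A \<inter> part v s i) = c i" if i: "i \<in> {1..s}" for i
    proof (cases "i = j")
      case True
      have "A \<inter> part v s i = insert e (A' \<inter> part v s j)" using True epart by (auto simp: A_def)
      moreover have "finite (A' \<inter> part v s j)" using A'(1) by simp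
      ultimately show ?thesis using eA A'(4) j True by (simp add: c'_def)
    next
      case False
      have "e \<notin> part v s i" using part_fst epart False by metis
      hence "A \<inter> part v s i = A' \<inter> part v s i" by (auto simp: A_def)
      thus ?thesis using A'(4) i False by (simp add: c'_def)
    qed
    show "\<exists>A. finite A \<and> indep_set_GS v s A \<and> card A = Suc k \<and> (\<forall>j\<in>{1..s}. card (A \<inter> part v s j) = c j)"
      using indep counts A'(1,3) eA by (intro exI[of _ A]) (auto simp: A_def)
  qed
qed

theorem mainTheorem14:
  fixes n s :: nat and v :: "nat \<Rightarrow> (nat \<Rightarrow> bool)" and b :: "nat \<Rightarrow> nat"
  assumes "2 \<le> s" and "s \<le> 2 ^ (n - 2)"
    and "\<forall>j\<in>{1..s}. v j \<in> vec2 n \<and> v j \<noteq> vzero"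
    and "inj_on v {1..s}"
    and "dim2 (v ` {1..s}) \<ge> 2"
    and "(\<Sum>j=1..s. b j) = 2 ^ (dim2 (v ` {1..s}) - 2)"
  shows "\<exists>A. indep_set_GS v s A \<and> card A = 2 ^ (dim2 (v ` {1..s}) - 2)
            \<and> (\<forall>j\<in>{1..s}. card (A \<inter> part v s j) = b j)"
proof -
  have "v ` {1..s} \<subseteq> vec2 n" using assms(3) by blast
  hence fin: "finite (span2 (v ` {1..s}))" using span2_vec2 vec2_finite finite_subset by metis
  show ?thesis
    using greedy[OF fin dim_bound[OF fin] assms(5), rule_format, OF assms(6)] by auto
qed

end
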